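(* Let $\beta\in[0,1)$, let $r$ be a real constant, and let $(R_n)_{n\ge1}$ be a sequence of independent real random variables such that \[ \sup_nE(R_n^2)<\infty\qquad\text{and}\qquad \sqrt{n^\beta\log n}\,\bigl\{E(\overline{R}_n)-r\bigr\}\longrightarrow0, \] where $\overline{R}_n=\frac1n\sum_{i=1}^nR_i$. Then \[ \overline{R}_n\longrightarrow r\ \text{ a.s.}\qquad\text{and}\qquad \frac{\sum_{j=1}^n j^{\beta-1}E|\overline{R}_j-r|}{\sqrt{a_n(\beta)}}\longrightarrow0, \] where $a_n(\beta)=\log n$ if $\beta=0$ and $a_n(\beta)=n^\beta$ if $\beta\in(0,1)$.
   Context: In the paper's model the weights $R_n$ satisfy: $R_n$ is independent of $(M_1,\dots,M_n,R_1,\dots,R_{n-1})$ (where $M_i$ are random measures), so in particular the $R_n$ are mutually independent; only this independence of the $R_n$ is relevant to the statement. *)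

theory Defs
  imports "HOL-Probability.Probability"
begin

definition Rbar :: "(nat \<Rightarrow> 'a \<Rightarrow> real) \<Rightarrow> nat \<Rightarrow> 'a \<Rightarrow> real" where
  "Rbar R n x = (\<Sum>i=1..n. R i x) / real n"

definition a_seq :: "real \<Rightarrow> nat \<Rightarrow> real" where
  "a_seq \<beta> n = (if \<beta> = 0 then ln (real n) else real n powr \<beta>)"

end

theory Submission
  imports Defs "HOL-Library.Discrete_Functions" "HOL-Real_Asymp.Real_Asymp"
begin


lemma telescope_bound:
  fixes w s :: "nat \<Rightarrow> real"
  assumes "\<And>j. j \<ge> 3 \<Longrightarrow> w j \<le> K * (s j - s (j-1))"
  shows "n \<ge> 2 \<Longrightarrow> (\<Sum>j=3..n. w j) \<le> K * (s n - s 2)"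
proof (induction n rule: dec_induct)
  case base then show ?case by simp
next
  case (step m)
  have "(\<Sum>j=3..Suc m. w j) = (\<Sum>j=3..m. w j) + w (Suc m)"
    using step by (subst sum.cl_ivl_Suc) auto
  also have "\<dots> \<le> K * (s m - s 2) + K * (s (Suc m) - s m)"
    using step assms[of "Suc m"] by (intro add_mono) auto
  finally show ?case by (simp add: algebra_simps)
qed

lemma sum_over_s_tendsto:
  fixes d w s :: "nat \<Rightarrow> real"
  assumes d0: "\<And>j. 0 \<le> d j" and ws: "\<And>j. j \<ge> 3 \<Longrightarrow> 0 < w j"
    and lim: "(\<lambda>j. d j / w j) \<longlonglongrightarrow> 0"
    and sb: "\<And>n. n \<ge> 2 \<Longrightarrow> (\<Sum>j=3..n. w j) \<le> K * s n"
    and sinf: "filterlim s at_top sequentially" and K: "K \<ge> 0"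
  shows "(\<lambda>n. (\<Sum>j=1..n. d j) / s n) \<longlonglongrightarrow> 0"
proof (rule LIMSEQ_I)
  fix \<epsilon> :: real assume e: "\<epsilon> > 0"
  define \<delta> where "\<delta> = \<epsilon> / (2 * (K + 1))"
  have dpos: "\<delta> > 0" using e K by (simp add: \<delta>_def)
  from LIMSEQ_D[OF lim dpos] obtain N where N: "\<And>j. j \<ge> N \<Longrightarrow> norm (d j / w j - 0) < \<delta>" by blast
  define N' where "N' = max N 3"
  define H where "H = (\<Sum>j=1..<N'. d j)"
  have H0: "H \<ge> 0" unfolding H_def by (intro sum_nonneg d0)
  have dle: "d j \<le> \<delta> * w j" if "j \<ge> N'" for j
  proof -
    have "j \<ge> N" "j \<ge> 3" using that by (auto simp: N'_def)
    then have "d j / w j < \<delta>" "w j > 0" using N[of j] ws[of j] d0[of j] by auto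
    then show ?thesis by (simp add: divide_less_eq)
  qed
  have ev1: "eventually (\<lambda>n. s n > 2 * H / \<epsilon> + 1) sequentially"
    using sinf by (simp add: filterlim_at_top_dense)
  have ev2: "eventually (\<lambda>n. n \<ge> N') sequentially" by (rule eventually_ge_at_top)
  have "eventually (\<lambda>n. norm ((\<Sum>j=1..n. d j) / s n - 0) < \<epsilon>) sequentially"
    using ev1 ev2
  proof eventually_elim
    case (elim n)
    have spos: "s n > 0" using elim(1) H0 e by (smt (verit) divide_nonneg_pos)
    have split: "{1..n} = {1..<N'} \<union> {N'..n}" using elim(2) by (auto simp: N'_def)
    have "(\<Sum>j=1..n. d j) = H + (\<Sum>j=N'..n. d j)"
      unfolding H_def split by (subst sum.union_disjoint) (auto simp: N'_def)
    also have "(\<Sum>j=N'..n. d j) \<le> (\<Sum>j=N'..n. \<delta> * w j)"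
      by (intro sum_mono dle) auto
    also have "\<dots> = \<delta> * (\<Sum>j=N'..n. w j)" by (simp add: sum_distrib_left)
    also have "(\<Sum>j=N'..n. w j) \<le> (\<Sum>j=3..n. w j)"
      by (intro sum_mono2) (auto simp: N'_def intro: less_imp_le ws)
    also have "\<dots> \<le> K * s n" using sb[of n] elim(2) by (auto simp: N'_def)
    finally have up: "(\<Sum>j=1..n. d j) \<le> H + \<delta> * (K * s n)" using dpos by (simp add: mult_left_mono)
    have lo: "(\<Sum>j=1..n. d j) \<ge> 0" by (intro sum_nonneg d0)
    have "H < \<epsilon> / 2 * s n"
    proof -
      have "2 * H / \<epsilon> < s n" using elim(1) by simp
      then have "2 * H < s n * \<epsilon>" using e by (simp add: divide_less_eq)
      then show ?thesis by (simp add: field_simps)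
    qed
    moreover have dk: "\<delta> * K \<le> \<epsilon> / 2"
    proof -
      have "\<delta> * K = \<epsilon> / 2 * (K / (K + 1))" using K by (simp add: \<delta>_def field_simps)
      also have "\<dots> \<le> \<epsilon> / 2 * 1" using K e by (intro mult_left_mono) auto
      finally show ?thesis by simp
    qed
    ultimately have "H + \<delta> * (K * s n) < \<epsilon> * s n"
    proof -
      have "\<delta> * (K * s n) = (\<delta> * K) * s n" by simp
      also have "\<dots> \<le> \<epsilon> / 2 * s n" using dk spos by (intro mult_right_mono) auto
      finally show ?thesis using \<open>H < \<epsilon> / 2 * s n\<close> by linarith
    qed
    then have "(\<Sum>j=1..n. d j) < \<epsilon> * s n" using up by simp
    then have "(\<Sum>j=1..n. d j) / s n < \<epsilon>" using spos by (simp add: divide_less_eq)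
    then show ?case using lo spos by simp
  qed
  then show "\<exists>no. \<forall>n\<ge>no. norm ((\<Sum>j=1..n. d j) / s n - 0) < \<epsilon>"
    by (simp add: eventually_sequentially)
qed

lemma ln_step:
  fixes j :: nat assumes "j \<ge> 3"
  shows "1 / (real j * sqrt (ln (real j))) \<le> 2 * (sqrt (ln (real j)) - sqrt (ln (real (j - 1))))"
proof -
  define a where "a = sqrt (ln (real j))"
  define b where "b = sqrt (ln (real (j - 1)))"
  have j1: "real (j - 1) = real j - 1" using assms by simp
  have lnj: "ln (real j) > 0" using assms by simp
  have ln1: "ln (real (j-1)) \<ge> 0"
  proof -
    have "(1::real) \<le> real (j - 1)" using assms by simp
    then show ?thesis by (rule ln_ge_zero)
  qed
  have a0: "a > 0" using lnj by (simp add: a_def)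
  have b0: "b \<ge> 0" using ln1 by (simp add: b_def)
  have "ln ((real j - 1) / real j) \<le> (real j - 1) / real j - 1"
    using assms by (intro ln_le_minus_one) auto
  then have "ln (real j - 1) - ln (real j) \<le> - 1 / real j"
    using assms by (simp add: ln_div field_simps)
  then have diff: "a\<^sup>2 - b\<^sup>2 \<ge> 1 / real j" using lnj ln1 j1 by (simp add: a_def b_def)
  have ab: "b \<le> a" unfolding a_def b_def using assms by (intro real_sqrt_le_mono) auto
  have "a\<^sup>2 - b\<^sup>2 = (a - b) * (a + b)" by (simp add: power2_eq_square algebra_simps)
  also have "\<dots> \<le> (a - b) * (2 * a)" using ab by (intro mult_left_mono) auto
  finally have "1 / real j \<le> (a - b) * (2 * a)" using diff by simp
  then have "1 / (real j * a) \<le> 2 * (a - b)" using a0 assms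
    by (simp add: field_simps)
  then show ?thesis by (simp add: a_def b_def)
qed

lemma powr_step:
  fixes j :: nat and p :: real assumes "j \<ge> 3" "0 < p" "p \<le> 1"
  shows "real j powr (p - 1) \<le> (1 / p) * (real j powr p - real (j - 1) powr p)"
proof -
  have jpos: "real j > 0" using assms by simp
  have j1: "real (j - 1) = real j - 1" using assms by simp
  have "((real j - 1) / real j) powr p * 1 powr (1 - p) \<le> p * ((real j - 1) / real j) + (1 - p) * 1"
    using assms by (intro Youngs_inequality_0) auto
  then have "(real j - 1) powr p / real j powr p \<le> 1 - p / real j"
    using assms by (simp add: powr_divide algebra_simps divide_simps)
  then have "(real j - 1) powr p \<le> (1 - p / real j) * real j powr p"
    using jpos by (simp add: divide_le_eq)
  also have "\<dots> = real j powr p - p * (real j powr p / real j)"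
    by (simp add: algebra_simps)
  finally have "(real j - 1) powr p \<le> real j powr p - p * (real j powr p / real j)" .
  moreover have "real j powr p / real j = real j powr (p - 1)"
    using jpos by (simp add: powr_diff)
  ultimately show ?thesis using assms j1 by (simp add: field_simps)
qed



lemma (in prob_space) cross_zero:
  fixes X :: "nat \<Rightarrow> 'a \<Rightarrow> real"
  assumes ind: "indep_vars (\<lambda>_. borel) X I" and int: "\<And>i. i\<in>I \<Longrightarrow> integrable M (X i)"
    and mean: "\<And>i. i\<in>I \<Longrightarrow> expectation (X i) = 0"
    and ab: "a\<in>I" "b\<in>I" "a\<noteq>b"
  shows "integrable M (\<lambda>x. X a x * X b x)" "expectation (\<lambda>x. X a x * X b x) = 0"
proof -
  have i2: "indep_vars (\<lambda>_. borel) X {a,b}" using ind ab by (auto intro: indep_vars_subset)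
  have "integrable M (\<lambda>x. \<Prod>i\<in>{a,b}. X i x)"
    by (rule indep_vars_integrable) (use i2 int ab in auto)
  then show "integrable M (\<lambda>x. X a x * X b x)" using ab by simp
  have "expectation (\<lambda>x. \<Prod>i\<in>{a,b}. X i x) = (\<Prod>i\<in>{a,b}. expectation (X i))"
    by (rule indep_vars_lebesgue_integral) (use i2 int ab in auto)
  then show "expectation (\<lambda>x. X a x * X b x) = 0" using ab mean by simp
qed

lemma (in prob_space) sq_sum_bound:
  fixes X :: "nat \<Rightarrow> 'a \<Rightarrow> real" and C :: real
  assumes ind: "indep_vars (\<lambda>_. borel) X I" and int: "\<And>i. i\<in>I \<Longrightarrow> integrable M (X i)"
    and mean: "\<And>i. i\<in>I \<Longrightarrow> expectation (X i) = 0"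
    and sq: "\<And>i. i\<in>I \<Longrightarrow> integrable M (\<lambda>x. (X i x)\<^sup>2)"
    and bnd: "\<And>i. i\<in>I \<Longrightarrow> expectation (\<lambda>x. (X i x)\<^sup>2) \<le> C"
  shows "finite A \<Longrightarrow> A \<subseteq> I \<Longrightarrow> integrable M (\<lambda>x. (\<Sum>i\<in>A. X i x)\<^sup>2) \<and> expectation (\<lambda>x. (\<Sum>i\<in>A. X i x)\<^sup>2) \<le> real (card A) * C"
proof (induction A rule: finite_induct)
  case empty show ?case by simp
next
  case (insert a A)
  have aI: "a \<in> I" and AI: "A \<subseteq> I" using insert by auto
  have cr1: "\<And>i. i \<in> A \<Longrightarrow> integrable M (\<lambda>x. X a x * X i x)"
    using cross_zero(1)[OF ind int mean] aI AI insert by blast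
  have cr2: "\<And>i. i \<in> A \<Longrightarrow> expectation (\<lambda>x. X a x * X i x) = 0"
    using cross_zero(2)[OF ind int mean] aI AI insert by blast
  have ci: "integrable M (\<lambda>x. X a x * (\<Sum>i\<in>A. X i x))"
    unfolding sum_distrib_left by (intro Bochner_Integration.integrable_sum cr1)
  have ce: "expectation (\<lambda>x. X a x * (\<Sum>i\<in>A. X i x)) = 0"
    unfolding sum_distrib_left by (subst Bochner_Integration.integral_sum) (auto intro: cr1 simp: cr2)
  have IH: "integrable M (\<lambda>x. (\<Sum>i\<in>A. X i x)\<^sup>2)" "expectation (\<lambda>x. (\<Sum>i\<in>A. X i x)\<^sup>2) \<le> real (card A) * C"
    using insert AI by auto
  have eq: "(\<lambda>x. (\<Sum>i\<in>insert a A. X i x)\<^sup>2) = (\<lambda>x. (X a x)\<^sup>2 + 2 * (X a x * (\<Sum>i\<in>A. X i x)) + (\<Sum>i\<in>A. X i x)\<^sup>2)"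
    using insert by (simp add: power2_eq_square algebra_simps)
  have int2: "integrable M (\<lambda>x. (X a x)\<^sup>2 + 2 * (X a x * (\<Sum>i\<in>A. X i x)) + (\<Sum>i\<in>A. X i x)\<^sup>2)"
    using sq[OF aI] ci IH(1) by auto
  have "expectation (\<lambda>x. (X a x)\<^sup>2 + 2 * (X a x * (\<Sum>i\<in>A. X i x)) + (\<Sum>i\<in>A. X i x)\<^sup>2)
     = expectation (\<lambda>x. (X a x)\<^sup>2) + 2 * expectation (\<lambda>x. X a x * (\<Sum>i\<in>A. X i x)) + expectation (\<lambda>x. (\<Sum>i\<in>A. X i x)\<^sup>2)"
    using sq[OF aI] ci IH(1) by simp
  also have "\<dots> \<le> C + card A * C" using bnd[OF aI] ce IH(2) by simp
  finally show ?case using eq int2 insert by (simp add: algebra_simps)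
qed

lemma (in prob_space) abs_le_sqrt_sq:
  fixes Y :: "'a \<Rightarrow> real"
  assumes [measurable]: "Y \<in> borel_measurable M" and sq: "integrable M (\<lambda>x. (Y x)\<^sup>2)"
  shows "integrable M (\<lambda>x. \<bar>Y x\<bar>)" "expectation (\<lambda>x. \<bar>Y x\<bar>) \<le> sqrt (expectation (\<lambda>x. (Y x)\<^sup>2))"
proof -
  have iY: "integrable M Y" by (rule square_integrable_imp_integrable) (use sq in auto)
  then show iA: "integrable M (\<lambda>x. \<bar>Y x\<bar>)" by auto
  define c where "c = expectation (\<lambda>x. \<bar>Y x\<bar>)"
  have "0 \<le> expectation (\<lambda>x. (\<bar>Y x\<bar> - c)\<^sup>2)" by simp
  also have "(\<lambda>x. (\<bar>Y x\<bar> - c)\<^sup>2) = (\<lambda>x. (Y x)\<^sup>2 - 2 * c * \<bar>Y x\<bar> + c\<^sup>2)"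
    by (simp add: power2_eq_square algebra_simps)
  also have "expectation \<dots> = expectation (\<lambda>x. (Y x)\<^sup>2) - 2 * c * c + c\<^sup>2"
    using sq iA by (simp add: c_def prob_space)
  finally have "c\<^sup>2 \<le> expectation (\<lambda>x. (Y x)\<^sup>2)" by (simp add: power2_eq_square)
  then show "expectation (\<lambda>x. \<bar>Y x\<bar>) \<le> sqrt (expectation (\<lambda>x. (Y x)\<^sup>2))"
    unfolding c_def by (rule real_le_rsqrt)
qed



lemma (in prob_space) AE_tendsto_zero_of_summable_expect:
  fixes Z :: "nat \<Rightarrow> 'a \<Rightarrow> real"
  assumes int: "\<And>m. integrable M (Z m)" and nn: "\<And>m x. x \<in> space M \<Longrightarrow> 0 \<le> Z m x"
    and sm: "summable (\<lambda>m. expectation (Z m))"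
  shows "AE x in M. (\<lambda>m. Z m x) \<longlonglongrightarrow> 0"
proof -
  have meas[measurable]: "\<And>m. Z m \<in> borel_measurable M" using int by auto
  have "(\<integral>\<^sup>+x. (\<Sum>m. ennreal (Z m x)) \<partial>M) = (\<Sum>m. \<integral>\<^sup>+x. ennreal (Z m x) \<partial>M)"
    by (rule nn_integral_suminf) auto
  also have "\<dots> = (\<Sum>m. ennreal (expectation (Z m)))"
    by (intro suminf_cong nn_integral_eq_integral int) (auto simp: nn)
  also have "\<dots> = ennreal (\<Sum>m. expectation (Z m))"
    by (intro suminf_ennreal2 sm integral_nonneg_AE) (auto simp: nn)
  finally have "(\<integral>\<^sup>+x. (\<Sum>m. ennreal (Z m x)) \<partial>M) \<noteq> \<infinity>" by simp
  then have "AE x in M. (\<Sum>m. ennreal (Z m x)) \<noteq> \<infinity>"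
    by (intro nn_integral_noteq_infinite) auto
  then show ?thesis
  proof (rule AE_mp, intro AE_I2 impI)
    fix x assume x: "x \<in> space M" and fin: "(\<Sum>m. ennreal (Z m x)) \<noteq> \<infinity>"
    have "summable (\<lambda>m. Z m x)" using fin by (intro summable_suminf_not_top) (auto simp: nn x)
    then show "(\<lambda>m. Z m x) \<longlonglongrightarrow> 0" by (rule summable_LIMSEQ_zero)
  qed
qed

lemma filterlim_floor_sqrt: "filterlim floor_sqrt at_top at_top"
  unfolding filterlim_at_top
proof (intro allI)
  fix k :: nat
  show "eventually (\<lambda>n. k \<le> floor_sqrt n) at_top"
    using eventually_ge_at_top[of "k^2"] by eventually_elim (rule le_floor_sqrtI)
qed

lemma cs_abs_sum:
  fixes a :: "nat \<Rightarrow> real"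
  shows "(\<Sum>i\<in>B. \<bar>a i\<bar>)\<^sup>2 \<le> real (card B) * (\<Sum>i\<in>B. (a i)\<^sup>2)"
  using Cauchy_Schwarz_ineq_sum[of "\<lambda>i. \<bar>a i\<bar>" "\<lambda>_. 1" B] by (simp add: mult.commute)



lemma (in prob_space) slln_aux:
  fixes X :: "nat \<Rightarrow> 'a \<Rightarrow> real" and C :: real
  assumes meas: "\<And>i. i \<ge> 1 \<Longrightarrow> X i \<in> borel_measurable M"
    and sqb: "\<And>A. finite A \<Longrightarrow> A \<subseteq> {1..} \<Longrightarrow> integrable M (\<lambda>x. (\<Sum>i\<in>A. X i x)\<^sup>2) \<and> expectation (\<lambda>x. (\<Sum>i\<in>A. X i x)\<^sup>2) \<le> real (card A) * C"
  shows "AE x in M. (\<lambda>n. (\<Sum>i=1..n. X i x) / real n) \<longlonglongrightarrow> 0"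
proof -
  define B where "B m = {m^2<..(Suc m)^2}" for m :: nat
  define T where "T m x = (\<Sum>i=1..m^2. X i x) / real m ^ 2" for m x
  define V where "V m x = real (2*m+1) * (\<Sum>i\<in>B m. (X i x)\<^sup>2) / real m ^ 4" for m x
  define Z where "Z m x = (T m x)\<^sup>2 + V m x" for m x
  have B1: "B m \<subseteq> {1..}" for m by (auto simp: B_def)
  have cardB: "card (B m) = 2*m+1" for m by (simp add: B_def power2_eq_square)
  have sq1: "integrable M (\<lambda>x. (X i x)\<^sup>2)" "expectation (\<lambda>x. (X i x)\<^sup>2) \<le> C" if "i \<ge> 1" for i
    using sqb[of "{i}"] that by auto
  have C0: "C \<ge> 0"
  proof -
    have "0 \<le> expectation (\<lambda>x. (X 1 x)\<^sup>2)" by (rule integral_nonneg_AE) simp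
    then show ?thesis using sq1(2)[of 1] by linarith
  qed
  have intT: "integrable M (\<lambda>x. (T m x)\<^sup>2)" and ET: "expectation (\<lambda>x. (T m x)\<^sup>2) \<le> C / real m ^ 2" for m
  proof -
    have eq: "(\<lambda>x. (T m x)\<^sup>2) = (\<lambda>x. (\<Sum>i=1..m^2. X i x)\<^sup>2 / real m ^ 4)"
      by (simp add: T_def power_divide flip: power_mult)
    have S: "integrable M (\<lambda>x. (\<Sum>i=1..m^2. X i x)\<^sup>2)" "expectation (\<lambda>x. (\<Sum>i=1..m^2. X i x)\<^sup>2) \<le> real (m^2) * C"
      using sqb[of "{1..m^2}"] by auto
    show "integrable M (\<lambda>x. (T m x)\<^sup>2)" unfolding eq using S(1) by simp
    have "expectation (\<lambda>x. (T m x)\<^sup>2) = expectation (\<lambda>x. (\<Sum>i=1..m^2. X i x)\<^sup>2) / real m ^ 4"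
      unfolding eq by simp
    also have "\<dots> \<le> real (m^2) * C / real m ^ 4" using S(2) by (simp add: divide_right_mono)
    also have "\<dots> = C / real m ^ 2"
      by (cases "m = 0") (simp_all add: field_simps power2_eq_square eval_nat_numeral)
    finally show "expectation (\<lambda>x. (T m x)\<^sup>2) \<le> C / real m ^ 2" .
  qed
  have intV: "integrable M (V m)" and EV: "expectation (V m) \<le> real (2*m+1)^2 * C / real m ^ 4" for m
  proof -
    have i: "\<And>i. i \<in> B m \<Longrightarrow> integrable M (\<lambda>x. (X i x)\<^sup>2)" using B1 sq1 by auto
    show "integrable M (V m)" unfolding V_def[abs_def] using i by auto
    have "expectation (V m) = real (2*m+1) * (\<Sum>i\<in>B m. expectation (\<lambda>x. (X i x)\<^sup>2)) / real m ^ 4"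
      unfolding V_def[abs_def] using i by (simp add: Bochner_Integration.integral_sum)
    also have "(\<Sum>i\<in>B m. expectation (\<lambda>x. (X i x)\<^sup>2)) \<le> (\<Sum>i\<in>B m. C)"
      using B1 sq1 by (intro sum_mono) auto
    also have "\<dots> = real (2*m+1) * C" by (simp add: cardB)
    finally show "expectation (V m) \<le> real (2*m+1)^2 * C / real m ^ 4"
      by (simp add: divide_right_mono power2_eq_square mult.assoc)
  qed
  have V0: "0 \<le> V m x" for m x unfolding V_def by (intro divide_nonneg_nonneg mult_nonneg_nonneg sum_nonneg) auto
  have Z0: "0 \<le> Z m x" for m x using V0[of m x] unfolding Z_def by simp
  have intZ: "integrable M (Z m)" for m unfolding Z_def[abs_def] using intT intV by auto
  have EZ: "expectation (Z m) \<le> 10 * C * inverse (real m ^ 2)" if "m \<ge> 1" for m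
  proof -
    have "expectation (Z m) = expectation (\<lambda>x. (T m x)\<^sup>2) + expectation (V m)"
      unfolding Z_def[abs_def] using intT intV by simp
    also have "\<dots> \<le> C / real m ^ 2 + real (2*m+1)^2 * C / real m ^ 4" using ET EV by (rule add_mono)
    also have "real (2*m+1)^2 * C / real m ^ 4 \<le> (9 * real m ^ 2) * C / real m ^ 4"
    proof -
      have "real (2*m+1) \<le> 3 * real m" using that by simp
      then have "real (2*m+1)^2 \<le> (3 * real m)^2" by (intro power_mono) auto
      then show ?thesis using C0 by (intro divide_right_mono mult_right_mono) (auto simp: power_mult_distrib)
    qed
    also have "(9 * real m ^ 2) * C / real m ^ 4 = 9 * C / real m ^ 2"
      using that by (simp add: field_simps eval_nat_numeral)
    finally show ?thesis by (simp add: field_simps)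
  qed
  have sumZ: "summable (\<lambda>m. expectation (Z m))"
  proof (rule summable_comparison_test')
    show "summable (\<lambda>m. 10 * C * inverse (real m ^ 2))"
      by (intro summable_mult inverse_power_summable) auto
    show "norm (expectation (Z m)) \<le> 10 * C * inverse (real m ^ 2)" if "m \<ge> 1" for m
      using EZ[OF that] integral_nonneg_AE[of "Z m" M] Z0 by auto
  qed
  have AEZ: "AE x in M. (\<lambda>m. Z m x) \<longlonglongrightarrow> 0"
    by (rule AE_tendsto_zero_of_summable_expect[OF intZ _ sumZ]) (rule Z0)
  show ?thesis using AEZ
  proof eventually_elim
    case (elim x)
    have bound: "\<bar>(\<Sum>i=1..n. X i x) / real n\<bar> \<le> 2 * sqrt (Z (floor_sqrt n) x)" if n1: "n \<ge> 1" for n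
    proof -
      define m where "m = floor_sqrt n"
      have m1: "m \<ge> 1" using n1 by (simp add: m_def Suc_le_eq)
      have mn: "m^2 \<le> n" "n < (Suc m)^2" unfolding m_def by (auto intro: Suc_floor_sqrt_power2_gt)
      define D where "D = (\<Sum>i\<in>B m. \<bar>X i x\<bar>)"
      have split: "{1..n} = {1..m^2} \<union> {m^2<..n}" using mn by auto
      have "(\<Sum>i=1..n. X i x) = (\<Sum>i=1..m^2. X i x) + (\<Sum>i\<in>{m^2<..n}. X i x)"
        unfolding split by (subst sum.union_disjoint) auto
      moreover have "\<bar>\<Sum>i\<in>{m^2<..n}. X i x\<bar> \<le> D"
      proof -
        have "\<bar>\<Sum>i\<in>{m^2<..n}. X i x\<bar> \<le> (\<Sum>i\<in>{m^2<..n}. \<bar>X i x\<bar>)" by (rule sum_abs)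
        also have "\<dots> \<le> D" unfolding D_def B_def using mn by (intro sum_mono2) auto
        finally show ?thesis .
      qed
      ultimately have Sn: "\<bar>\<Sum>i=1..n. X i x\<bar> \<le> \<bar>\<Sum>i=1..m^2. X i x\<bar> + D" by linarith
      have mpos: "real m ^ 2 > 0" using m1 by simp
      have "real m ^ 2 \<le> real n" using mn(1) by (metis of_nat_le_iff of_nat_power)
      then have "\<bar>(\<Sum>i=1..n. X i x) / real n\<bar> \<le> \<bar>\<Sum>i=1..n. X i x\<bar> / real m ^ 2"
        using mpos by (simp add: abs_divide frac_le)
      also have "\<dots> \<le> (\<bar>\<Sum>i=1..m^2. X i x\<bar> + D) / real m ^ 2"
        using Sn mpos by (simp add: divide_right_mono)
      also have "\<dots> = \<bar>T m x\<bar> + D / real m ^ 2" using mpos by (simp add: T_def add_divide_distrib abs_divide)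
      also have "\<bar>T m x\<bar> \<le> sqrt (Z m x)"
        using V0[of m x] unfolding Z_def by (intro real_le_rsqrt) simp
      also have "D / real m ^ 2 \<le> sqrt (Z m x)"
      proof (rule real_le_rsqrt)
        have "D\<^sup>2 \<le> real (card (B m)) * (\<Sum>i\<in>B m. (X i x)\<^sup>2)" unfolding D_def by (rule cs_abs_sum)
        then have "(D / real m ^ 2)\<^sup>2 \<le> V m x"
          unfolding V_def cardB using mpos by (simp add: power_divide divide_right_mono flip: power_mult)
        also have "\<dots> \<le> Z m x" unfolding Z_def by simp
        finally show "(D / real m ^ 2)\<^sup>2 \<le> Z m x" .
      qed
      finally show ?thesis by (simp add: m_def)
    qed
    have "(\<lambda>n. 2 * sqrt (Z (floor_sqrt n) x)) \<longlonglongrightarrow> 2 * sqrt 0"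
      by (intro tendsto_mult tendsto_const tendsto_real_sqrt filterlim_compose[OF elim filterlim_floor_sqrt])
    then have lim2: "(\<lambda>n. 2 * sqrt (Z (floor_sqrt n) x)) \<longlonglongrightarrow> 0" by simp
    have "(\<lambda>n. \<bar>(\<Sum>i=1..n. X i x) / real n\<bar>) \<longlonglongrightarrow> 0"
    proof (rule tendsto_sandwich[OF _ _ tendsto_const lim2])
      show "eventually (\<lambda>n. 0 \<le> \<bar>(\<Sum>i=1..n. X i x) / real n\<bar>) sequentially" by simp
      show "eventually (\<lambda>n. \<bar>(\<Sum>i=1..n. X i x) / real n\<bar> \<le> 2 * sqrt (Z (floor_sqrt n) x)) sequentially"
        using eventually_ge_at_top[of 1] by eventually_elim (rule bound)
    qed
    then show ?case by (rule tendsto_rabs_zero_cancel)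
  qed
qed


theorem lemma6:
  fixes M :: "'a measure" and R :: "nat \<Rightarrow> 'a \<Rightarrow> real" and \<beta> r :: real
  assumes "prob_space M"
    and "0 \<le> \<beta>" and "\<beta> < 1"
    and "prob_space.indep_vars M (\<lambda>_. borel) R {1..}"
    and "\<And>n. n \<ge> 1 \<Longrightarrow> integrable M (\<lambda>x. (R n x)\<^sup>2)"
    and "\<exists>C. \<forall>n\<ge>1. (\<integral>x. (R n x)\<^sup>2 \<partial>M) \<le> C"
    and "(\<lambda>n. sqrt (real n powr \<beta> * ln (real n)) * ((\<integral>x. Rbar R n x \<partial>M) - r)) \<longlonglongrightarrow> 0"
  shows "(AE x in M. (\<lambda>n. Rbar R n x) \<longlonglongrightarrow> r) \<and>
         (\<lambda>n. (\<Sum>j=1..n. real j powr (\<beta> - 1) * (\<integral>x. \<bar>Rbar R j x - r\<bar> \<partial>M))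
             / sqrt (a_seq \<beta> n)) \<longlonglongrightarrow> 0"
proof -
  interpret prob_space M by (rule assms(1))
  obtain C where C: "\<And>n. n \<ge> 1 \<Longrightarrow> expectation (\<lambda>x. (R n x)\<^sup>2) \<le> C" using assms(6) by blast
  have C0: "C \<ge> 0"
  proof -
    have "0 \<le> expectation (\<lambda>x. (R 1 x)\<^sup>2)" by (rule integral_nonneg_AE) simp
    then show ?thesis using C[of 1] by linarith
  qed
  have measR[measurable]: "R i \<in> borel_measurable M" if "i \<ge> 1" for i
    using assms(4) that unfolding indep_vars_def by auto
  have intR: "integrable M (R i)" if "i \<ge> 1" for i
    by (rule square_integrable_imp_integrable) (use that assms(5) measR in auto)
  define \<mu> where "\<mu> i = expectation (R i)" for i
  define X where "X i x = R i x - \<mu> i" for i x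
  have indX: "indep_vars (\<lambda>_. borel) X {1..}"
    unfolding X_def by (rule indep_vars_compose2[OF assms(4)]) auto
  have intX: "integrable M (X i)" if "i \<in> {1..}" for i
    unfolding X_def[abs_def] using intR[of i] that by auto
  have meanX: "expectation (X i) = 0" if "i \<in> {1..}" for i
    unfolding X_def[abs_def] using intR[of i] that by (simp add: \<mu>_def prob_space)
  have eqX2: "(\<lambda>x. (X i x)\<^sup>2) = (\<lambda>x. (R i x)\<^sup>2 - 2 * \<mu> i * R i x + (\<mu> i)\<^sup>2)" for i
    unfolding X_def by (simp add: power2_eq_square algebra_simps)
  have sqX: "integrable M (\<lambda>x. (X i x)\<^sup>2)" if "i \<in> {1..}" for i
  proof -
    have "integrable M (\<lambda>x. (R i x)\<^sup>2)" using assms(5)[of i] that by auto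
    moreover have "integrable M (\<lambda>x. 2 * \<mu> i * R i x)" using intR[of i] that by auto
    ultimately show ?thesis unfolding eqX2
      by (intro Bochner_Integration.integrable_add Bochner_Integration.integrable_diff integrable_const)
  qed
  have bX: "expectation (\<lambda>x. (X i x)\<^sup>2) \<le> C" if "i \<in> {1..}" for i
  proof -
    have "expectation (\<lambda>x. (X i x)\<^sup>2) = expectation (\<lambda>x. (R i x)\<^sup>2) - 2 * \<mu> i * \<mu> i + (\<mu> i)\<^sup>2"
    proof -
      have i1: "integrable M (\<lambda>x. (R i x)\<^sup>2)" using assms(5)[of i] that by auto
      have i2: "integrable M (\<lambda>x. 2 * \<mu> i * R i x)" using intR[of i] that by auto
      have "expectation (\<lambda>x. (R i x)\<^sup>2 - 2 * \<mu> i * R i x + (\<mu> i)\<^sup>2)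
          = expectation (\<lambda>x. (R i x)\<^sup>2 - 2 * \<mu> i * R i x) + (\<mu> i)\<^sup>2"
      proof -
        have i3: "integrable M (\<lambda>x. (R i x)\<^sup>2 - 2 * \<mu> i * R i x)"
          using i1 i2 by (rule Bochner_Integration.integrable_diff)
        have i4: "integrable M (\<lambda>x. (\<mu> i)\<^sup>2)" by (rule integrable_const)
        show ?thesis using Bochner_Integration.integral_add[OF i3 i4] by (simp add: prob_space)
      qed
      also have "expectation (\<lambda>x. (R i x)\<^sup>2 - 2 * \<mu> i * R i x) = expectation (\<lambda>x. (R i x)\<^sup>2) - 2 * \<mu> i * \<mu> i"
        using Bochner_Integration.integral_diff[OF i1 i2] by (simp add: \<mu>_def)
      finally show ?thesis unfolding eqX2 .
    qed
    also have "\<dots> \<le> expectation (\<lambda>x. (R i x)\<^sup>2)" by (simp add: power2_eq_square)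
    finally show ?thesis using C[of i] that by auto
  qed
  have sqb: "integrable M (\<lambda>x. (\<Sum>i\<in>A. X i x)\<^sup>2) \<and> expectation (\<lambda>x. (\<Sum>i\<in>A. X i x)\<^sup>2) \<le> real (card A) * C"
    if "finite A" "A \<subseteq> {1..}" for A
  proof (rule sq_sum_bound[OF indX _ _ _ _ that])
    show "\<And>i. i \<in> {1..} \<Longrightarrow> integrable M (X i)" by (rule intX)
    show "\<And>i. i \<in> {1..} \<Longrightarrow> expectation (X i) = 0" by (rule meanX)
    show "\<And>i. i \<in> {1..} \<Longrightarrow> integrable M (\<lambda>x. (X i x)\<^sup>2)" by (rule sqX)
    show "\<And>i. i \<in> {1..} \<Longrightarrow> expectation (\<lambda>x. (X i x)\<^sup>2) \<le> C" by (rule bX)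
  qed
  have AES: "AE x in M. (\<lambda>n. (\<Sum>i=1..n. X i x) / real n) \<longlonglongrightarrow> 0"
  proof (rule slln_aux[of X C])
    fix i :: nat assume "1 \<le> i" then show "X i \<in> borel_measurable M" using intX[of i] by auto
  next
    fix A :: "nat set" assume "finite A" "A \<subseteq> {1..}"
    then show "integrable M (\<lambda>x. (\<Sum>i\<in>A. X i x)\<^sup>2) \<and> expectation (\<lambda>x. (\<Sum>i\<in>A. X i x)\<^sup>2) \<le> real (card A) * C"
      by (rule sqb)
  qed
  define m where "m n = (\<Sum>i=1..n. \<mu> i) / real n" for n
  have Rbar_eq: "Rbar R n x = (\<Sum>i=1..n. X i x) / real n + m n" for n x
    unfolding Rbar_def m_def X_def by (simp add: sum_subtractf add_divide_distrib[symmetric])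
  have ERbar: "expectation (Rbar R n) = m n" for n
    unfolding Rbar_def[abs_def] m_def \<mu>_def using intR
    by (subst integral_divide_zero, subst Bochner_Integration.integral_sum) auto
  have hyp: "(\<lambda>n. sqrt (real n powr \<beta> * ln (real n)) * (m n - r)) \<longlonglongrightarrow> 0"
    using assms(7) by (simp add: ERbar)
  have mlim: "(\<lambda>n. m n - r) \<longlonglongrightarrow> 0"
  proof -
    have "(\<lambda>n. \<bar>m n - r\<bar>) \<longlonglongrightarrow> 0"
    proof (rule tendsto_sandwich[OF _ _ tendsto_const tendsto_rabs_zero[OF hyp]])
      show "eventually (\<lambda>n. 0 \<le> \<bar>m n - r\<bar>) sequentially" by simp
      show "eventually (\<lambda>n. \<bar>m n - r\<bar> \<le> \<bar>sqrt (real n powr \<beta> * ln (real n)) * (m n - r)\<bar>) sequentially"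
        using eventually_ge_at_top[of 3]
      proof eventually_elim
        case (elim n)
        have "real n powr \<beta> \<ge> 1" using elim assms(2) by (intro ge_one_powr_ge_zero) auto
        moreover have "ln (real n) \<ge> 1"
        proof -
          have "exp 1 \<le> (3::real)" by (rule exp_le)
          then have "exp 1 \<le> real n" using elim by linarith
          then show ?thesis using elim by (subst ln_ge_iff) auto
        qed
        ultimately have "real n powr \<beta> * ln (real n) \<ge> 1"
          by (metis mult_mono' mult_1 zero_le_one order_trans)
        then have "sqrt (real n powr \<beta> * ln (real n)) \<ge> 1" by simp
        then show ?case by (simp add: abs_mult mult_le_cancel_right1)
      qed
    qed
    then show ?thesis by (rule tendsto_rabs_zero_cancel)
  qed
  have part1: "AE x in M. (\<lambda>n. Rbar R n x) \<longlonglongrightarrow> r"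
    using AES
  proof eventually_elim
    case (elim x)
    have "(\<lambda>n. (\<Sum>i=1..n. X i x) / real n + ((m n - r) + r)) \<longlonglongrightarrow> 0 + (0 + r)"
      by (intro tendsto_add elim mlim tendsto_const)
    then show ?case by (simp add: Rbar_eq)
  qed

  have lnge1: "ln (real n) \<ge> 1" if "n \<ge> 3" for n
  proof -
    have "exp 1 \<le> (3::real)" by (rule exp_le)
    then have "exp 1 \<le> real n" using that by linarith
    then show ?thesis using that by (subst ln_ge_iff) auto
  qed
  define e where "e j = \<bar>m j - r\<bar>" for j
  define g where "g j = sqrt (C / real j) + e j" for j
  have EA: "integrable M (\<lambda>x. \<bar>Rbar R j x - r\<bar>) \<and> expectation (\<lambda>x. \<bar>Rbar R j x - r\<bar>) \<le> g j"
    if j1: "j \<ge> 1" for j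
  proof -
    define Y where "Y x = (\<Sum>i=1..j. X i x) / real j" for x
    have S: "integrable M (\<lambda>x. (\<Sum>i=1..j. X i x)\<^sup>2)" "expectation (\<lambda>x. (\<Sum>i=1..j. X i x)\<^sup>2) \<le> real j * C"
      using sqb[of "{1..j}"] by auto
    have Y2: "(\<lambda>x. (Y x)\<^sup>2) = (\<lambda>x. (\<Sum>i=1..j. X i x)\<^sup>2 / real j ^ 2)" by (simp add: Y_def power_divide)
    have intY2: "integrable M (\<lambda>x. (Y x)\<^sup>2)" unfolding Y2 using S(1) by (rule integrable_divide)
    have intY: "integrable M Y" unfolding Y_def[abs_def]
      by (intro integrable_divide Bochner_Integration.integrable_sum intX) auto
    have measY: "Y \<in> borel_measurable M" using intY by (rule borel_measurable_integrable)
    have "expectation (\<lambda>x. (Y x)\<^sup>2) = expectation (\<lambda>x. (\<Sum>i=1..j. X i x)\<^sup>2) / real j ^ 2"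
      unfolding Y2 by simp
    also have "\<dots> \<le> real j * C / real j ^ 2" using S(2) by (simp add: divide_right_mono)
    also have "\<dots> = C / real j" using j1 by (simp add: power2_eq_square)
    finally have EY2: "expectation (\<lambda>x. (Y x)\<^sup>2) \<le> C / real j" .
    note AY = abs_le_sqrt_sq[OF measY intY2]
    have EY: "expectation (\<lambda>x. \<bar>Y x\<bar>) \<le> sqrt (C / real j)"
      using AY(2) EY2 by (meson order_trans real_sqrt_le_mono)
    have eqR: "(\<lambda>x. \<bar>Rbar R j x - r\<bar>) = (\<lambda>x. \<bar>Y x + (m j - r)\<bar>)"
      by (simp add: Rbar_eq Y_def algebra_simps)
    have i1: "integrable M (\<lambda>x. Y x + (m j - r))" using intY by simp
    have i2: "integrable M (\<lambda>x. \<bar>Y x\<bar> + e j)" using AY(1) by simp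
    have iR: "integrable M (\<lambda>x. \<bar>Rbar R j x - r\<bar>)" unfolding eqR using i1 by (rule integrable_abs)
    have pt: "\<bar>Rbar R j x - r\<bar> \<le> \<bar>Y x\<bar> + e j" for x
    proof -
      have "\<bar>Rbar R j x - r\<bar> = \<bar>Y x + (m j - r)\<bar>" using fun_cong[OF eqR, of x] by simp
      also have "\<dots> \<le> \<bar>Y x\<bar> + \<bar>m j - r\<bar>" by (rule abs_triangle_ineq)
      finally show ?thesis by (simp add: e_def)
    qed
    have "expectation (\<lambda>x. \<bar>Rbar R j x - r\<bar>) \<le> expectation (\<lambda>x. \<bar>Y x\<bar> + e j)"
      using iR i2 by (rule integral_mono) (rule pt)
    also have "\<dots> = expectation (\<lambda>x. \<bar>Y x\<bar>) + e j" using AY(1) by (simp add: prob_space)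
    also have "\<dots> \<le> g j" using EY by (simp add: g_def)
    finally show ?thesis using iR by simp
  qed
  define d where "d j = real j powr (\<beta> - 1) * g j" for j
  define w where "w j = real j powr (\<beta>/2) / (real j * sqrt (ln (real j)))" for j
  define s where "s n = sqrt (a_seq \<beta> n)" for n
  define K where "K = (if \<beta> = 0 then 2 else 2 / \<beta>)"
  have K0: "K \<ge> 0" using assms(2) by (simp add: K_def)
  have g0: "0 \<le> g j" for j using C0 by (simp add: g_def e_def)
  have d0: "0 \<le> d j" for j using g0[of j] by (simp add: d_def)
  have ws: "0 < w j" if "j \<ge> 3" for j using that by (simp add: w_def)
  have stp: "w j \<le> K * (s j - s (j - 1))" if j3: "j \<ge> 3" for j
  proof (cases "\<beta> = 0")
    case True
    then have "w j = 1 / (real j * sqrt (ln (real j)))" using j3 by (simp add: w_def)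
    also have "\<dots> \<le> 2 * (sqrt (ln (real j)) - sqrt (ln (real (j - 1))))" by (rule ln_step[OF j3])
    finally show ?thesis using True by (simp add: K_def s_def a_seq_def)
  next
    case False
    then have bpos: "\<beta> > 0" using assms(2) by simp
    have jp: "real j > 0" using j3 by simp
    have "sqrt (ln (real j)) \<ge> 1" using lnge1[OF j3] by simp
    then have "w j \<le> real j powr (\<beta>/2) / real j" unfolding w_def using jp j3
      by (intro divide_left_mono mult_pos_pos) (auto simp: mult_le_cancel_left1)
    also have "\<dots> = real j powr (\<beta>/2 - 1)" using jp by (simp add: powr_diff)
    also have "\<dots> \<le> (1 / (\<beta>/2)) * (real j powr (\<beta>/2) - real (j - 1) powr (\<beta>/2))"
      by (rule powr_step[OF j3]) (use bpos assms(3) in auto)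
    also have "\<dots> = K * (s j - s (j - 1))"
      using False by (simp add: K_def s_def a_seq_def powr_half_sqrt_powr)
    finally show ?thesis .
  qed
  have s2: "s 2 \<ge> 0" by (simp add: s_def a_seq_def)
  have sb: "(\<Sum>j=3..n. w j) \<le> K * s n" if "n \<ge> 2" for n
  proof -
    have "(\<Sum>j=3..n. w j) \<le> K * (s n - s 2)" by (rule telescope_bound[of w K s, OF stp that])
    also have "\<dots> \<le> K * s n" using K0 s2 by (simp add: algebra_simps mult_nonneg_nonneg)
    finally show ?thesis .
  qed
  have sinf: "filterlim s at_top sequentially"
  proof (cases "\<beta> = 0")
    case True
    then have "s = (\<lambda>n. sqrt (ln (real n)))" by (simp add: s_def a_seq_def fun_eq_iff)
    then show ?thesis by simp real_asymp
  next
    case False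
    then have bpos: "\<beta> > 0" using assms(2) by simp
    have "s = (\<lambda>n. sqrt (real n powr \<beta>))" using False by (simp add: s_def a_seq_def fun_eq_iff)
    then show ?thesis using bpos by simp real_asymp
  qed
  have q1: "(\<lambda>j. sqrt C * (real j powr (\<beta>/2) * sqrt (ln (real j)) / sqrt (real j))) \<longlonglongrightarrow> 0"
  proof -
    have "(\<lambda>j::nat. real j powr (\<beta>/2) * sqrt (ln (real j)) / sqrt (real j)) \<longlonglongrightarrow> 0"
      using assms(3) by real_asymp
    then show ?thesis by (rule tendsto_mult_right_zero)
  qed
  have q2: "(\<lambda>j. \<bar>sqrt (real j powr \<beta> * ln (real j)) * (m j - r)\<bar>) \<longlonglongrightarrow> 0"
    using tendsto_rabs_zero[OF hyp] .
  have lim: "(\<lambda>j. d j / w j) \<longlonglongrightarrow> 0"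
  proof -
    have "(\<lambda>j. sqrt C * (real j powr (\<beta>/2) * sqrt (ln (real j)) / sqrt (real j))
              + \<bar>sqrt (real j powr \<beta> * ln (real j)) * (m j - r)\<bar>) \<longlonglongrightarrow> 0"
      using tendsto_add[OF q1 q2] by simp
    then show ?thesis
    proof (rule Lim_transform_eventually)
      show "eventually (\<lambda>j. sqrt C * (real j powr (\<beta>/2) * sqrt (ln (real j)) / sqrt (real j))
              + \<bar>sqrt (real j powr \<beta> * ln (real j)) * (m j - r)\<bar> = d j / w j) sequentially"
        using eventually_ge_at_top[of 3]
      proof eventually_elim
        case (elim j)
        define A where "A = real j powr (\<beta>/2)"
        have jp: "real j > 0" using elim by simp
        have lp: "ln (real j) > 0" using elim by simp
        have Ap: "A > 0" using jp by (simp add: A_def)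
        have AA: "real j powr (\<beta> - 1) * real j = A * A"
        proof -
          have "real j powr (\<beta> - 1) * real j = real j powr \<beta>" using jp by (simp add: powr_diff)
          also have "\<dots> = A * A" by (simp add: A_def flip: powr_add)
          finally show ?thesis .
        qed
        have Asq: "sqrt (real j powr \<beta>) = A" using jp by (simp add: A_def powr_half_sqrt_powr)
        have "d j / w j = (real j powr (\<beta> - 1) * real j) * sqrt (ln (real j)) * g j / A"
          using jp lp Ap unfolding d_def w_def A_def by (simp add: field_simps)
        also have "\<dots> = A * sqrt (ln (real j)) * g j" using Ap unfolding AA by (simp add: field_simps)
        also have "\<dots> = sqrt C * (A * sqrt (ln (real j)) / sqrt (real j)) + (sqrt (real j powr \<beta>) * sqrt (ln (real j))) * e j"
          unfolding g_def Asq by (simp add: real_sqrt_divide field_simps)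
        also have "(sqrt (real j powr \<beta>) * sqrt (ln (real j))) * e j = \<bar>sqrt (real j powr \<beta> * ln (real j)) * (m j - r)\<bar>"
          using lp by (simp add: e_def abs_mult real_sqrt_mult)
        finally show ?case by (simp add: A_def)
      qed
    qed
  qed
  have main: "(\<lambda>n. (\<Sum>j=1..n. d j) / s n) \<longlonglongrightarrow> 0"
    by (rule sum_over_s_tendsto[OF d0 ws lim sb sinf K0])
  have part2: "(\<lambda>n. (\<Sum>j=1..n. real j powr (\<beta> - 1) * (\<integral>x. \<bar>Rbar R j x - r\<bar> \<partial>M)) / sqrt (a_seq \<beta> n)) \<longlonglongrightarrow> 0"
  proof (rule tendsto_sandwich[OF _ _ tendsto_const main])
    show "eventually (\<lambda>n. 0 \<le> (\<Sum>j=1..n. real j powr (\<beta> - 1) * (\<integral>x. \<bar>Rbar R j x - r\<bar> \<partial>M)) / sqrt (a_seq \<beta> n)) sequentially"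
      using eventually_ge_at_top[of 2]
    proof eventually_elim
      case (elim n)
      have "0 \<le> a_seq \<beta> n" using elim by (simp add: a_seq_def)
      then show ?case by (intro divide_nonneg_nonneg sum_nonneg mult_nonneg_nonneg integral_nonneg_AE) auto
    qed
    show "eventually (\<lambda>n. (\<Sum>j=1..n. real j powr (\<beta> - 1) * (\<integral>x. \<bar>Rbar R j x - r\<bar> \<partial>M)) / sqrt (a_seq \<beta> n) \<le> (\<Sum>j=1..n. d j) / s n) sequentially"
      using eventually_ge_at_top[of 2]
    proof eventually_elim
      case (elim n)
      have "0 \<le> a_seq \<beta> n" using elim by (simp add: a_seq_def)
      then have "0 \<le> s n" by (simp add: s_def)
      moreover have "(\<Sum>j=1..n. real j powr (\<beta> - 1) * (\<integral>x. \<bar>Rbar R j x - r\<bar> \<partial>M)) \<le> (\<Sum>j=1..n. d j)"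
        unfolding d_def using EA by (intro sum_mono mult_left_mono) auto
      ultimately show ?case by (simp add: s_def divide_right_mono)
    qed
  qed
  show ?thesis using part1 part2 by blast
qed

end
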